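(* Consider standard (linear-kernel) $k$-means on $\mathbb{R}$. For every $m\in\mathbb{N}$ there exist $k\in\mathbb{N}$ and a finite dataset $X\subset\mathbb{R}$ such that: the price of explainability of $X$ is $p(X)=1$; the tree produced by IMM (with reference clustering an optimal $k$-means clustering of $X$) attains $p(T_{IMM},X)=1$; but ExKMC initialized on the empty tree and run until the tree has $k$ leaves constructs a decision tree $T$ with $p(T,X)\ge m$.
   Context: $k$-means cost of a partition $C_1,\dots,C_k$ of $X$: $\sum_l\sum_{x\in C_l}\|x-c_l\|^2$ with $c_l$ the mean of $C_l$; $\mathrm{cost}_{opt}(X)$ is its minimum. The reference clustering is an optimal $k$-means partition with centers $c_1,\dots,c_k$ (its means); for $x\in X$, $c(x)$ is the center of its cluster. For a decision tree $T$ whose $k$ leaves partition $X$, $\mathrm{cost}(T,X)$ is the $k$-means cost of the leaf partition and $p(T,X)=\mathrm{cost}(T,X)/\mathrm{cost}_{opt}(X)$; $p(X)=\min_T p(T,X)$ over interpretable decision trees with $k$ leaves, i.e. trees where each internal node splits its data $X^u$ into $\{x\in X^u:x_i\in[\theta_1,\theta_2]\}$ and its complement for some coordinate $i$ and reals $\theta_1<\theta_2$. IMM: build a tree top-down; each node $u$ holds points $X^u$ and centers $\mathcal{M}^u$ (root: all). If $|\mathcal{M}^u|=1$, $u$ is a leaf; otherwise choose, among threshold cuts $x_i\le\theta$ splitting $\mathcal{M}^u$ into two nonempty parts, one minimizing the number of mistakes (points $x\in X^u$ with $c(x)\in\mathcal{M}^u$ lying on the opposite side of the cut from $c(x)$),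 and pass points and centers to the children accordingly. ExKMC: start with one leaf containing $X$. While the number of leaves is less than $k$: for each leaf $u$ (data $X^u$) and each cut $(i,\theta)$ with $X^u_L=\{x\in X^u:x_i\le\theta\}$, $X^u_R=\{x\in X^u:x_i>\theta\}$, let $\mathrm{cost}_{exkmc}(u,i,\theta)=\min_{j,l\in[k]}\big(\sum_{x\in X^u_L}\|x-c_j\|^2+\sum_{x\in X^u_R}\|x-c_l\|^2\big)$; choose the leaf and cut maximizing $\min_{j\in[k]}\sum_{x\in X^u}\|x-c_j\|^2-\mathrm{cost}_{exkmc}(u,i,\theta)$, and replace that leaf by its two children $X^u_L,X^u_R$. *)

theory Defs
  imports Complex_Main
begin

definition mean :: "real set \<Rightarrow> real" where
  "mean S = (\<Sum>x\<in>S. x) / real (card S)"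

definition cluster_cost :: "real set \<Rightarrow> real" where
  "cluster_cost S = (\<Sum>x\<in>S. (x - mean S)^2)"

definition is_kclustering :: "real set \<Rightarrow> nat \<Rightarrow> (nat \<Rightarrow> real set) \<Rightarrow> bool" where
  "is_kclustering X k C \<longleftrightarrow>
     (\<forall>l<k. C l \<noteq> {}) \<and> (\<Union>l<k. C l) = X \<and>
     (\<forall>l<k. \<forall>l'<k. l \<noteq> l' \<longrightarrow> C l \<inter> C l' = {})"

definition kmeans_cost :: "nat \<Rightarrow> (nat \<Rightarrow> real set) \<Rightarrow> real" where
  "kmeans_cost k C = (\<Sum>l<k. cluster_cost (C l))"

definition cost_opt :: "real set \<Rightarrow> nat \<Rightarrow> real" where
  "cost_opt X k = Inf {kmeans_cost k C | C. is_kclustering X k C}"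

definition optimal_clustering :: "real set \<Rightarrow> nat \<Rightarrow> (nat \<Rightarrow> real set) \<Rightarrow> bool" where
  "optimal_clustering X k C \<longleftrightarrow> is_kclustering X k C \<and> kmeans_cost k C = cost_opt X k"

definition ref_center :: "nat \<Rightarrow> (nat \<Rightarrow> real set) \<Rightarrow> real \<Rightarrow> real" where
  "ref_center k C x = mean (C (SOME l. l < k \<and> x \<in> C l))"

definition partition_cost :: "real set list \<Rightarrow> real" where
  "partition_cost Ls = sum_list (map cluster_cost Ls)"

text \<open>INode a b T1 T2: points x with x in [a,b] go to T1, the others to T2.\<close>
datatype itree = ILeaf | INode real real itree itree

fun ileaves :: "itree \<Rightarrow> real set \<Rightarrow> real set list" where
  "ileaves ILeaf S = [S]"
| "ileaves (INode a b l r) S =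
     ileaves l {x\<in>S. a \<le> x \<and> x \<le> b} @ ileaves r {x\<in>S. \<not> (a \<le> x \<and> x \<le> b)}"

fun interpretable :: "itree \<Rightarrow> bool" where
  "interpretable ILeaf = True"
| "interpretable (INode a b l r) = (a < b \<and> interpretable l \<and> interpretable r)"

definition price_itree :: "itree \<Rightarrow> real set \<Rightarrow> nat \<Rightarrow> real" where
  "price_itree T X k = partition_cost (ileaves T X) / cost_opt X k"

definition price_expl :: "real set \<Rightarrow> nat \<Rightarrow> real" where
  "price_expl X k = Inf {price_itree T X k | T. interpretable T \<and> length (ileaves T X) = k}"

text \<open>TNode \<theta> T1 T2: points x with x \<le> \<theta> go to T1, the others to T2.\<close>
datatype ttree = TLeaf | TNode real ttree ttree

fun tleaves :: "ttree \<Rightarrow> real set \<Rightarrow> real set list" where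
  "tleaves TLeaf S = [S]"
| "tleaves (TNode t l r) S = tleaves l {x\<in>S. x \<le> t} @ tleaves r {x\<in>S. x > t}"

fun nleaves :: "ttree \<Rightarrow> nat" where
  "nleaves TLeaf = 1"
| "nleaves (TNode t l r) = nleaves l + nleaves r"

definition price_ttree :: "ttree \<Rightarrow> real set \<Rightarrow> nat \<Rightarrow> real" where
  "price_ttree T X k = partition_cost (tleaves T X) / cost_opt X k"

definition mistakes :: "(real \<Rightarrow> real) \<Rightarrow> real set \<Rightarrow> real set \<Rightarrow> real \<Rightarrow> nat" where
  "mistakes c U M \<theta> = card {x\<in>U. c x \<in> M \<and> ((x \<le> \<theta>) \<noteq> (c x \<le> \<theta>))}"

definition splits_centers :: "real set \<Rightarrow> real \<Rightarrow> bool" where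
  "splits_centers M \<theta> \<longleftrightarrow> {\<mu>\<in>M. \<mu> \<le> \<theta>} \<noteq> {} \<and> {\<mu>\<in>M. \<mu> > \<theta>} \<noteq> {}"

text \<open>imm c U M T: IMM (with any admissible tie-breaking), started at a node holding
  points U and centers M, can output the subtree T.\<close>
inductive imm :: "(real \<Rightarrow> real) \<Rightarrow> real set \<Rightarrow> real set \<Rightarrow> ttree \<Rightarrow> bool" where
  imm_leaf: "card M = 1 \<Longrightarrow> imm c U M TLeaf"
| imm_node: "\<lbrakk> card M \<noteq> 1; splits_centers M \<theta>;
              \<forall>\<theta>'. splits_centers M \<theta>' \<longrightarrow> mistakes c U M \<theta> \<le> mistakes c U M \<theta>';
              imm c {x\<in>U. x \<le> \<theta>} {\<mu>\<in>M. \<mu> \<le> \<theta>} Tl;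
              imm c {x\<in>U. x > \<theta>} {\<mu>\<in>M. \<mu> > \<theta>} Tr \<rbrakk>
             \<Longrightarrow> imm c U M (TNode \<theta> Tl Tr)"

definition imm_tree :: "real set \<Rightarrow> nat \<Rightarrow> (nat \<Rightarrow> real set) \<Rightarrow> ttree \<Rightarrow> bool" where
  "imm_tree X k C T \<longleftrightarrow> imm (ref_center k C) X ((\<lambda>l. mean (C l)) ` {..<k}) T"

text \<open>Replace the i-th leaf (left-to-right, from 0) by a cut at \<theta> with two leaf children.\<close>
fun repl :: "ttree \<Rightarrow> nat \<Rightarrow> real \<Rightarrow> ttree" where
  "repl TLeaf i \<theta> = (if i = 0 then TNode \<theta> TLeaf TLeaf else TLeaf)"
| "repl (TNode t l r) i \<theta> =
     (if i < nleaves l then TNode t (repl l i \<theta>) r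
      else TNode t l (repl r (i - nleaves l) \<theta>))"

definition sqdist_sum :: "real set \<Rightarrow> real \<Rightarrow> real" where
  "sqdist_sum A c = (\<Sum>x\<in>A. (x - c)^2)"

text \<open>cen l = c_l, the reference centers, l < k.\<close>
definition exkmc_cost :: "nat \<Rightarrow> (nat \<Rightarrow> real) \<Rightarrow> real set \<Rightarrow> real \<Rightarrow> real" where
  "exkmc_cost k cen U \<theta> =
     Min {sqdist_sum {x\<in>U. x \<le> \<theta>} (cen j) + sqdist_sum {x\<in>U. x > \<theta>} (cen l) | j l. j < k \<and> l < k}"

definition exkmc_gain :: "nat \<Rightarrow> (nat \<Rightarrow> real) \<Rightarrow> real set \<Rightarrow> real \<Rightarrow> real" where
  "exkmc_gain k cen U \<theta> = Min {sqdist_sum U (cen j) | j. j < k} - exkmc_cost k cen U \<theta>"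

text \<open>One ExKMC step on data X: split a leaf with a gain-maximizing cut (any tie-breaking).\<close>
definition exkmc_step :: "nat \<Rightarrow> (nat \<Rightarrow> real) \<Rightarrow> real set \<Rightarrow> ttree \<Rightarrow> ttree \<Rightarrow> bool" where
  "exkmc_step k cen X T T' \<longleftrightarrow>
     (\<exists>i \<theta>. i < nleaves T \<and> T' = repl T i \<theta> \<and>
        (\<forall>i' \<theta>'. i' < nleaves T \<longrightarrow>
           exkmc_gain k cen (tleaves T X ! i') \<theta>' \<le> exkmc_gain k cen (tleaves T X ! i) \<theta>))"

definition exkmc_tree :: "real set \<Rightarrow> nat \<Rightarrow> (nat \<Rightarrow> real set) \<Rightarrow> ttree \<Rightarrow> bool" where
  "exkmc_tree X k C T \<longleftrightarrow>
     (exkmc_step k (\<lambda>l. mean (C l)) X)\<^sup>*\<^sup>* TLeaf T \<and> nleaves T = k"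

end

theory Submission
  imports Defs
begin



lemma Min_sum_pairs:
  fixes f g :: "real \<Rightarrow> real"
  assumes "finite P" "P \<noteq> {}"
  shows "Min {f u + g v | u v. u \<in> P \<and> v \<in> P} = Min (f ` P) + Min (g ` P)"
proof -
  have "Min (f ` P) \<in> f ` P" using assms by simp
  then obtain a where a: "a \<in> P" "f a = Min (f ` P)" by auto
  have "Min (g ` P) \<in> g ` P" using assms by simp
  then obtain b where b: "b \<in> P" "g b = Min (g ` P)" by auto
  have fin: "finite {f u + g v | u v. u \<in> P \<and> v \<in> P}"
  proof -
    have "{f u + g v | u v. u \<in> P \<and> v \<in> P} = (\<lambda>(u,v). f u + g v) ` (P \<times> P)" by auto
    thus ?thesis using assms by simp
  qed
  show ?thesis
  proof (rule Min_eqI[OF fin])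
    fix y assume "y \<in> {f u + g v | u v. u \<in> P \<and> v \<in> P}"
    then obtain u v where "u \<in> P" "v \<in> P" "y = f u + g v" by auto
    moreover have "Min (f ` P) \<le> f u" "Min (g ` P) \<le> g v" using assms calculation by auto
    ultimately show "Min (f ` P) + Min (g ` P) \<le> y" by simp
  next
    show "Min (f ` P) + Min (g ` P) \<in> {f u + g v | u v. u \<in> P \<and> v \<in> P}"
      using a b by (metis (mono_tags, lifting) mem_Collect_eq)
  qed
qed

definition mm :: "real \<Rightarrow> real set \<Rightarrow> real" where
  "mm D S = min (sqdist_sum S (-D)) (min (sqdist_sum S 0) (sqdist_sum S D))"

lemma gain_eq:
  assumes "cen ` {..<k} = {-D,0,D}"
  shows "exkmc_gain k cen U \<theta> = mm D U - (mm D {x\<in>U. x\<le>\<theta>} + mm D {x\<in>U. x>\<theta>})"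
proof -
  have e1: "{sqdist_sum {x\<in>U. x \<le> \<theta>} (cen j) + sqdist_sum {x\<in>U. x > \<theta>} (cen l) | j l. j < k \<and> l < k}
     = {sqdist_sum {x\<in>U. x \<le> \<theta>} u + sqdist_sum {x\<in>U. x > \<theta>} v | u v. u \<in> {-D,0,D} \<and> v \<in> {-D,0,D}}"
    unfolding assms[symmetric] by auto
  have e2: "{sqdist_sum U (cen j) | j. j < k} = (sqdist_sum U) ` {-D,0,D}"
    unfolding assms[symmetric] by auto
  show ?thesis unfolding exkmc_gain_def exkmc_cost_def e1 e2
    by (subst Min_sum_pairs) (auto simp: mm_def)
qed

lemma cost_nonneg: "cluster_cost S \<ge> 0"
  unfolding cluster_cost_def by (rule sum_nonneg) simp

lemma pair_lb:
  assumes "finite S" "x \<in> S" "y \<in> S"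
  shows "cluster_cost S \<ge> (x-y)^2/2"
proof (cases "x = y")
  case True thus ?thesis using cost_nonneg by simp
next
  case False
  define \<mu> where "\<mu> = mean S"
  have "(\<Sum>z\<in>{x,y}. (z-\<mu>)^2) \<le> (\<Sum>z\<in>S. (z-\<mu>)^2)"
    by (rule sum_mono2) (use assms in auto)
  moreover have "(\<Sum>z\<in>{x,y}. (z-\<mu>)^2) = (x-\<mu>)^2 + (y-\<mu>)^2" using False by simp
  moreover have "(x-\<mu>)^2 + (y-\<mu>)^2 \<ge> (x-y)^2/2"
  proof -
    have "2*((x-\<mu>)^2 + (y-\<mu>)^2) - (x-y)^2 = (x+y-2*\<mu>)^2"
      by (simp add: power2_eq_square algebra_simps)
    moreover have "(x+y-2*\<mu>)^2 \<ge> 0" by simp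
    ultimately have "(x-y)^2 \<le> 2*((x-\<mu>)^2 + (y-\<mu>)^2)" by linarith
    thus ?thesis by simp
  qed
  ultimately show ?thesis unfolding cluster_cost_def \<mu>_def by linarith
qed

lemma cost_pair: "cluster_cost {a-1, a+1} = 2"
  unfolding cluster_cost_def mean_def by simp




definition GA :: "real \<Rightarrow> real set" where "GA D = {-D-1, -D+1}"
definition GB :: "real set" where "GB = {-1, 1}"
definition GC :: "real \<Rightarrow> real set" where "GC D = {D-1, D+1}"
definition XX :: "real \<Rightarrow> real set" where "XX D = {-D-1, -D+1, -1, 1, D-1, D+1}"

lemma XX_eq: "XX D = GA D \<union> GB \<union> GC D" unfolding XX_def GA_def GB_def GC_def by auto

lemma sq64: "\<bar>x - y\<bar> \<ge> (8::real) \<Longrightarrow> (x-y)^2 \<ge> 64"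
proof -
  assume "\<bar>x - y\<bar> \<ge> 8"
  hence "8^2 \<le> \<bar>x-y\<bar>^2" by (rule power_mono) simp
  thus ?thesis by simp
qed

lemma cost_GA: "cluster_cost (GA D) = 2"
  using cost_pair[of "-D"] unfolding GA_def by (simp add: algebra_simps)
lemma cost_GB: "cluster_cost GB = 2"
  using cost_pair[of "0"] unfolding GB_def by simp
lemma cost_GC: "cluster_cost (GC D) = 2"
  using cost_pair[of "D"] unfolding GC_def by (simp add: algebra_simps)

lemma pure_or_big:
  assumes D: "D \<ge> 10" and S: "S \<subseteq> XX D"
  shows "S \<subseteq> GA D \<or> S \<subseteq> GB \<or> S \<subseteq> GC D \<or> cluster_cost S \<ge> 32"
proof (rule ccontr)
  assume H: "\<not> ?thesis"
  have fin: "finite S" using S finite_subset unfolding XX_def by auto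
  have close: "\<bar>x - y\<bar> < 8" if "x \<in> S" "y \<in> S" for x y
  proof (rule ccontr)
    assume "\<not> \<bar>x - y\<bar> < 8"
    hence "(x-y)^2 \<ge> 64" using sq64 by simp
    moreover have "cluster_cost S \<ge> (x-y)^2/2" using pair_lb fin that by blast
    ultimately show False using H by linarith
  qed
  have "S \<noteq> {}" using H by auto
  then obtain x where x: "x \<in> S" by auto
  have "x \<in> XX D" using x S by auto
  then consider "x \<in> GA D" | "x \<in> GB" | "x \<in> GC D" unfolding XX_eq by auto
  then show False
  proof cases
    case 1
    have "S \<subseteq> GA D"
    proof
      fix y assume y: "y \<in> S"
      have "\<bar>x - y\<bar> < 8" using close x y by auto
      moreover have "y \<in> XX D" using y S by auto
      ultimately show "y \<in> GA D" using 1 D unfolding XX_def GA_def by auto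
    qed
    thus False using H by auto
  next
    case 2
    have "S \<subseteq> GB"
    proof
      fix y assume y: "y \<in> S"
      have "\<bar>x - y\<bar> < 8" using close x y by auto
      moreover have "y \<in> XX D" using y S by auto
      ultimately show "y \<in> GB" using 2 D unfolding XX_def GB_def by auto
    qed
    thus False using H by auto
  next
    case 3
    have "S \<subseteq> GC D"
    proof
      fix y assume y: "y \<in> S"
      have "\<bar>x - y\<bar> < 8" using close x y by auto
      moreover have "y \<in> XX D" using y S by auto
      ultimately show "y \<in> GC D" using 3 D unfolding XX_def GC_def by auto
    qed
    thus False using H by auto
  qed
qed

definition perm3 :: "real \<Rightarrow> (real set \<times> real set \<times> real set) set" where
  "perm3 D = {(GA D, GB, GC D), (GA D, GC D, GB), (GB, GA D, GC D), (GB, GC D, GA D),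
              (GC D, GA D, GB), (GC D, GB, GA D)}"

definition GG :: "real \<Rightarrow> nat \<Rightarrow> real set" where
  "GG D a = (if a = 0 then GA D else if a = 1 then GB else GC D)"

lemma pure_perm:
  assumes D: "D \<ge> 10"
    and U: "S0 \<union> S1 \<union> S2 = XX D"
    and d: "S0 \<inter> S1 = {}" "S0 \<inter> S2 = {}" "S1 \<inter> S2 = {}"
    and p0: "S0 \<subseteq> GA D \<or> S0 \<subseteq> GB \<or> S0 \<subseteq> GC D"
    and p1: "S1 \<subseteq> GA D \<or> S1 \<subseteq> GB \<or> S1 \<subseteq> GC D"
    and p2: "S2 \<subseteq> GA D \<or> S2 \<subseteq> GB \<or> S2 \<subseteq> GC D"
  shows "(S0, S1, S2) \<in> perm3 D"
proof -
  have ex: "\<exists>a<3. S \<subseteq> GG D a" if "S \<subseteq> GA D \<or> S \<subseteq> GB \<or> S \<subseteq> GC D" for S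
  proof -
    have "S \<subseteq> GG D 0 \<or> S \<subseteq> GG D 1 \<or> S \<subseteq> GG D 2" using that unfolding GG_def by simp
    then consider "S \<subseteq> GG D 0" | "S \<subseteq> GG D 1" | "S \<subseteq> GG D 2" by blast
    then show ?thesis
    proof cases
      case 1 then show ?thesis by (intro exI[of _ 0]) simp
    next
      case 2 then show ?thesis by (intro exI[of _ 1]) simp
    next
      case 3 then show ?thesis by (intro exI[of _ 2]) simp
    qed
  qed
  obtain a0 where a0: "a0 < 3" "S0 \<subseteq> GG D a0" using ex[OF p0] by blast
  obtain a1 where a1: "a1 < 3" "S1 \<subseteq> GG D a1" using ex[OF p1] by blast
  obtain a2 where a2: "a2 < 3" "S2 \<subseteq> GG D a2" using ex[OF p2] by blast
  have Gd: "GG D a \<inter> GG D b = {}" if "a \<noteq> b" "a < 3" "b < 3" for a b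
    using that D unfolding GG_def GA_def GB_def GC_def by (auto split: if_splits)
  have Gne: "GG D a \<noteq> {}" for a unfolding GG_def GA_def GB_def GC_def by auto
  have cov: "GG D a \<subseteq> S0 \<union> S1 \<union> S2" if "a < 3" for a
    using that unfolding U XX_def GG_def GA_def GB_def GC_def by (auto split: if_splits)
  have miss: False if "b < 3" "b \<noteq> a0" "b \<noteq> a1" "b \<noteq> a2" for b
  proof -
    have "GG D b \<inter> S0 = {}" using Gd[of b a0] a0 that by blast
    moreover have "GG D b \<inter> S1 = {}" using Gd[of b a1] a1 that by blast
    moreover have "GG D b \<inter> S2 = {}" using Gd[of b a2] a2 that by blast
    ultimately show False using cov[of b] Gne[of b] that by blast
  qed
  have dist: "a0 \<noteq> a1 \<and> a0 \<noteq> a2 \<and> a1 \<noteq> a2"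
  proof (rule ccontr)
    assume "\<not> ?thesis"
    hence "\<exists>b<3. b \<noteq> a0 \<and> b \<noteq> a1 \<and> b \<noteq> a2" using a0(1) a1(1) a2(1) by presburger
    thus False using miss by blast
  qed
  have e0: "S0 = GG D a0"
  proof
    show "GG D a0 \<subseteq> S0" using cov[of a0] a0 a1 a2 Gd[of a0 a1] Gd[of a0 a2] dist by blast
  qed (rule a0(2))
  have e1: "S1 = GG D a1"
  proof
    show "GG D a1 \<subseteq> S1" using cov[of a1] a0 a1 a2 Gd[of a1 a0] Gd[of a1 a2] dist by blast
  qed (rule a1(2))
  have e2: "S2 = GG D a2"
  proof
    show "GG D a2 \<subseteq> S2" using cov[of a2] a0 a1 a2 Gd[of a2 a0] Gd[of a2 a1] dist by blast
  qed (rule a2(2))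
  have "a0 \<in> {0,1,2}" "a1 \<in> {0,1,2}" "a2 \<in> {0,1,2}" using a0 a1 a2 by auto
  then show ?thesis unfolding e0 e1 e2 perm3_def GG_def using dist by auto
qed




lemma mm_ge: "sqdist_sum S (-D) \<ge> v \<Longrightarrow> sqdist_sum S 0 \<ge> v \<Longrightarrow> sqdist_sum S D \<ge> v \<Longrightarrow> mm D S \<ge> v"
  unfolding mm_def by simp
lemma mm_le1: "mm D S \<le> sqdist_sum S (-D)" unfolding mm_def by simp
lemma mm_le2: "mm D S \<le> sqdist_sum S 0" unfolding mm_def by simp
lemma mm_le3: "mm D S \<le> sqdist_sum S D" unfolding mm_def by simp
lemma mm_nonneg: "mm D S \<ge> 0" unfolding mm_def sqdist_sum_def by (simp add: sum_nonneg)
lemma mm_empty: "mm D {} = 0" unfolding mm_def sqdist_sum_def by simp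

definition KK :: "real \<Rightarrow> real set \<Rightarrow> real \<Rightarrow> real" where
  "KK D U \<theta> = mm D {x\<in>U. x\<le>\<theta>} + mm D {x\<in>U. x>\<theta>}"

lemma step1_lb:
  assumes D: "D \<ge> 10"
  shows "KK D (XX D) \<theta> \<ge> 2*D^2-4*D+6 \<and> ((\<theta> < -1 \<or> \<theta> \<ge> 1) \<longrightarrow> KK D (XX D) \<theta> > 2*D^2-4*D+6)"
proof -
  have DD: "D*D \<ge> 10*D" using D by simp
  have DD2: "D*D > 2*D + 1" using D DD by linarith
  consider "\<theta> < -D-1" | "-D-1 \<le> \<theta>" "\<theta> < -D+1" | "-D+1 \<le> \<theta>" "\<theta> < -1" | "-1 \<le> \<theta>" "\<theta> < 1"
    | "1 \<le> \<theta>" "\<theta> < D-1" | "D-1 \<le> \<theta>" "\<theta> < D+1" | "D+1 \<le> \<theta>" by linarith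
  then show ?thesis
  proof cases
    case 1
    have "{x\<in>XX D. x>\<theta>} = {-D-1, -D+1, -1, 1, D-1, D+1}" using 1 D unfolding XX_def by auto
    moreover have "mm D {-D-1, -D+1, -1, 1, D-1, D+1} \<ge> 4*D^2+6"
      by (rule mm_ge) (use D DD in \<open>simp_all add: sqdist_sum_def power2_eq_square algebra_simps\<close>)
    ultimately have "KK D (XX D) \<theta> > 2*D^2-4*D+6" using D DD mm_nonneg[of D "{x\<in>XX D. x\<le>\<theta>}"] unfolding KK_def power2_eq_square by (simp only:; linarith)
    thus ?thesis by simp
  next
    case 2
    have "{x\<in>XX D. x>\<theta>} = {-D+1, -1, 1, D-1, D+1}" using 2 D unfolding XX_def by auto
    moreover have "mm D {-D+1, -1, 1, D-1, D+1} \<ge> 3*D^2-2*D+5"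
      by (rule mm_ge) (use D DD in \<open>simp_all add: sqdist_sum_def power2_eq_square algebra_simps\<close>)
    ultimately have "KK D (XX D) \<theta> > 2*D^2-4*D+6" using D DD mm_nonneg[of D "{x\<in>XX D. x\<le>\<theta>}"] unfolding KK_def power2_eq_square by (simp only:; linarith)
    thus ?thesis by simp
  next
    case 3
    have "{x\<in>XX D. x>\<theta>} = {-1, 1, D-1, D+1}" using 3 D unfolding XX_def by auto
    moreover have "mm D {-1, 1, D-1, D+1} \<ge> 2*D^2+4"
      by (rule mm_ge) (use D DD in \<open>simp_all add: sqdist_sum_def power2_eq_square algebra_simps\<close>)
    ultimately have "KK D (XX D) \<theta> > 2*D^2-4*D+6" using D DD mm_nonneg[of D "{x\<in>XX D. x\<le>\<theta>}"] unfolding KK_def power2_eq_square by (simp only:; linarith)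
    thus ?thesis by simp
  next
    case 4
    have "{x\<in>XX D. x\<le>\<theta>} = {-D-1, -D+1, -1}" using 4 D unfolding XX_def by auto
    moreover have "{x\<in>XX D. x>\<theta>} = {1, D-1, D+1}" using 4 D unfolding XX_def by auto
    moreover have "mm D {-D-1, -D+1, -1} \<ge> D^2-2*D+3"
      by (rule mm_ge) (use D DD in \<open>simp_all add: sqdist_sum_def power2_eq_square algebra_simps\<close>)
    moreover have "mm D {1, D-1, D+1} \<ge> D^2-2*D+3"
      by (rule mm_ge) (use D DD in \<open>simp_all add: sqdist_sum_def power2_eq_square algebra_simps\<close>)
    ultimately show ?thesis using 4 unfolding KK_def by simp
  next
    case 5
    have "{x\<in>XX D. x\<le>\<theta>} = {-D-1, -D+1, -1, 1}" using 5 D unfolding XX_def by auto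
    moreover have "mm D {-D-1, -D+1, -1, 1} \<ge> 2*D^2+4"
      by (rule mm_ge) (use D DD in \<open>simp_all add: sqdist_sum_def power2_eq_square algebra_simps\<close>)
    ultimately have "KK D (XX D) \<theta> > 2*D^2-4*D+6" using D DD mm_nonneg[of D "{x\<in>XX D. x>\<theta>}"] unfolding KK_def power2_eq_square by (simp only:; linarith)
    thus ?thesis by simp
  next
    case 6
    have "{x\<in>XX D. x\<le>\<theta>} = {-D-1, -D+1, -1, 1, D-1}" using 6 D unfolding XX_def by auto
    moreover have "mm D {-D-1, -D+1, -1, 1, D-1} \<ge> 3*D^2-2*D+5"
      by (rule mm_ge) (use D DD in \<open>simp_all add: sqdist_sum_def power2_eq_square algebra_simps\<close>)
    ultimately have "KK D (XX D) \<theta> > 2*D^2-4*D+6" using D DD mm_nonneg[of D "{x\<in>XX D. x>\<theta>}"] unfolding KK_def power2_eq_square by (simp only:; linarith)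
    thus ?thesis by simp
  next
    case 7
    have "{x\<in>XX D. x\<le>\<theta>} = {-D-1, -D+1, -1, 1, D-1, D+1}" using 7 D unfolding XX_def by auto
    moreover have "mm D {-D-1, -D+1, -1, 1, D-1, D+1} \<ge> 4*D^2+6"
      by (rule mm_ge) (use D DD in \<open>simp_all add: sqdist_sum_def power2_eq_square algebra_simps\<close>)
    ultimately have "KK D (XX D) \<theta> > 2*D^2-4*D+6" using D DD mm_nonneg[of D "{x\<in>XX D. x>\<theta>}"] unfolding KK_def power2_eq_square by (simp only:; linarith)
    thus ?thesis by simp
  qed
qed

lemma step1_eq:
  assumes D: "D \<ge> 10" and t: "-1 \<le> \<theta>" "\<theta> < 1"
  shows "KK D (XX D) \<theta> = 2*D^2-4*D+6"
proof -
  have "{x\<in>XX D. x\<le>\<theta>} = {-D-1, -D+1, -1}" using t D unfolding XX_def by auto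
  moreover have "{x\<in>XX D. x>\<theta>} = {1, D-1, D+1}" using t D unfolding XX_def by auto
  moreover have "mm D {-D-1, -D+1, -1} \<le> D^2-2*D+3"
    using mm_le1[of D "{-D-1, -D+1, -1}"] D
    by (simp add: sqdist_sum_def power2_eq_square algebra_simps)
  moreover have "mm D {1, D-1, D+1} \<le> D^2-2*D+3"
    using mm_le3[of D "{1, D-1, D+1}"] D
    by (simp add: sqdist_sum_def power2_eq_square algebra_simps)
  ultimately show ?thesis using step1_lb[OF D, of \<theta>] unfolding KK_def by simp
qed

definition L0 :: "real \<Rightarrow> real set" where "L0 D = {-D-1, -D+1, -1}"
definition R0 :: "real \<Rightarrow> real set" where "R0 D = {1, D-1, D+1}"

lemma mm_L0: assumes D: "D \<ge> 10" shows "mm D (L0 D) = D^2-2*D+3"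
proof -
  have DD: "D*D \<ge> 10*D" using D by simp
  have "mm D (L0 D) \<ge> D^2-2*D+3" unfolding L0_def
    by (rule mm_ge) (use D DD in \<open>simp_all add: sqdist_sum_def power2_eq_square algebra_simps\<close>)
  moreover have "mm D (L0 D) \<le> D^2-2*D+3"
    using mm_le1[of D "L0 D"] D unfolding L0_def
    by (simp add: sqdist_sum_def power2_eq_square algebra_simps)
  ultimately show ?thesis by simp
qed

lemma mm_R0: assumes D: "D \<ge> 10" shows "mm D (R0 D) = D^2-2*D+3"
proof -
  have DD: "D*D \<ge> 10*D" using D by simp
  have "mm D (R0 D) \<ge> D^2-2*D+3" unfolding R0_def
    by (rule mm_ge) (use D DD in \<open>simp_all add: sqdist_sum_def power2_eq_square algebra_simps\<close>)
  moreover have "mm D (R0 D) \<le> D^2-2*D+3"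
    using mm_le3[of D "R0 D"] D unfolding R0_def
    by (simp add: sqdist_sum_def power2_eq_square algebra_simps)
  ultimately show ?thesis by simp
qed

lemma KK_L0:
  assumes D: "D \<ge> 10"
  shows "KK D (L0 D) \<theta> \<ge> 3 \<and> (KK D (L0 D) \<theta> \<le> 3 \<longrightarrow> -D+1 \<le> \<theta> \<and> \<theta> < -1)"
proof -
  have DD: "D*D \<ge> 10*D" using D by simp
  have DD2: "D*D > 2*D + 1" using D DD by linarith
  consider "\<theta> < -D-1" | "-D-1 \<le> \<theta>" "\<theta> < -D+1" | "-D+1 \<le> \<theta>" "\<theta> < -1" | "-1 \<le> \<theta>" by linarith
  then show ?thesis
  proof cases
    case 1
    have "{x\<in>L0 D. x>\<theta>} = L0 D" using 1 D unfolding L0_def by auto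
    hence "KK D (L0 D) \<theta> > 3" using mm_L0[OF D] mm_nonneg[of D "{x\<in>L0 D. x\<le>\<theta>}"] D DD unfolding KK_def power2_eq_square by (simp only:; linarith)
    thus ?thesis by simp
  next
    case 2
    have "{x\<in>L0 D. x>\<theta>} = {-D+1, -1}" using 2 D unfolding L0_def by auto
    moreover have "mm D {-D+1, -1} \<ge> D^2-2*D+2"
      by (rule mm_ge) (use D DD in \<open>simp_all add: sqdist_sum_def power2_eq_square algebra_simps\<close>)
    ultimately have "KK D (L0 D) \<theta> > 3" using D DD mm_nonneg[of D "{x\<in>L0 D. x\<le>\<theta>}"] unfolding KK_def power2_eq_square by (simp only:; linarith)
    thus ?thesis by simp
  next
    case 3
    have "{x\<in>L0 D. x\<le>\<theta>} = {-D-1, -D+1}" using 3 D unfolding L0_def by auto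
    moreover have "{x\<in>L0 D. x>\<theta>} = {-1}" using 3 D unfolding L0_def by auto
    moreover have "mm D {-D-1, -D+1} \<ge> 2"
      by (rule mm_ge) (use D DD in \<open>simp_all add: sqdist_sum_def power2_eq_square algebra_simps\<close>)
    moreover have "mm D {-1} \<ge> 1"
      by (rule mm_ge) (use D DD in \<open>simp_all add: sqdist_sum_def power2_eq_square algebra_simps\<close>)
    ultimately show ?thesis using 3 unfolding KK_def by simp
  next
    case 4
    have "{x\<in>L0 D. x\<le>\<theta>} = L0 D" using 4 D unfolding L0_def by auto
    hence "KK D (L0 D) \<theta> > 3" using mm_L0[OF D] mm_nonneg[of D "{x\<in>L0 D. x>\<theta>}"] D DD unfolding KK_def power2_eq_square by (simp only:; linarith)
    thus ?thesis by simp
  qed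
qed

lemma KK_L0_eq:
  assumes D: "D \<ge> 10" and t: "-D+1 \<le> \<theta>" "\<theta> < -1"
  shows "KK D (L0 D) \<theta> = 3"
proof -
  have "{x\<in>L0 D. x\<le>\<theta>} = {-D-1, -D+1}" using t D unfolding L0_def by auto
  moreover have "{x\<in>L0 D. x>\<theta>} = {-1}" using t D unfolding L0_def by auto
  moreover have "mm D {-D-1, -D+1} \<le> 2"
    using mm_le1[of D "{-D-1, -D+1}"] D by (simp add: sqdist_sum_def power2_eq_square algebra_simps)
  moreover have "mm D {-1} \<le> 1"
    using mm_le2[of D "{-1}"] D by (simp add: sqdist_sum_def)
  ultimately show ?thesis using KK_L0[OF D, of \<theta>] unfolding KK_def by simp
qed

lemma KK_R0:
  assumes D: "D \<ge> 10"
  shows "KK D (R0 D) \<theta> \<ge> 3 \<and> (KK D (R0 D) \<theta> \<le> 3 \<longrightarrow> 1 \<le> \<theta> \<and> \<theta> < D-1)"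
proof -
  have DD: "D*D \<ge> 10*D" using D by simp
  consider "\<theta> < 1" | "1 \<le> \<theta>" "\<theta> < D-1" | "D-1 \<le> \<theta>" "\<theta> < D+1" | "D+1 \<le> \<theta>" by linarith
  then show ?thesis
  proof cases
    case 1
    have "{x\<in>R0 D. x>\<theta>} = R0 D" using 1 D unfolding R0_def by auto
    hence "KK D (R0 D) \<theta> > 3" using mm_R0[OF D] mm_nonneg[of D "{x\<in>R0 D. x\<le>\<theta>}"] D DD unfolding KK_def power2_eq_square by (simp only:; linarith)
    thus ?thesis by simp
  next
    case 2
    have "{x\<in>R0 D. x\<le>\<theta>} = {1}" using 2 D unfolding R0_def by auto
    moreover have "{x\<in>R0 D. x>\<theta>} = {D-1, D+1}" using 2 D unfolding R0_def by auto
    moreover have "mm D {D-1, D+1} \<ge> 2"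
      by (rule mm_ge) (use D DD in \<open>simp_all add: sqdist_sum_def power2_eq_square algebra_simps\<close>)
    moreover have "mm D {1} \<ge> 1"
      by (rule mm_ge) (use D DD in \<open>simp_all add: sqdist_sum_def power2_eq_square algebra_simps\<close>)
    ultimately show ?thesis using 2 unfolding KK_def by simp
  next
    case 3
    have "{x\<in>R0 D. x\<le>\<theta>} = {1, D-1}" using 3 D unfolding R0_def by auto
    moreover have "mm D {1, D-1} \<ge> D^2-2*D+2"
      by (rule mm_ge) (use D DD in \<open>simp_all add: sqdist_sum_def power2_eq_square algebra_simps\<close>)
    ultimately have "KK D (R0 D) \<theta> > 3" using D DD mm_nonneg[of D "{x\<in>R0 D. x>\<theta>}"] unfolding KK_def power2_eq_square by (simp only:; linarith)
    thus ?thesis by simp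
  next
    case 4
    have "{x\<in>R0 D. x\<le>\<theta>} = R0 D" using 4 D unfolding R0_def by auto
    hence "KK D (R0 D) \<theta> > 3" using mm_R0[OF D] mm_nonneg[of D "{x\<in>R0 D. x>\<theta>}"] D DD unfolding KK_def power2_eq_square by (simp only:; linarith)
    thus ?thesis by simp
  qed
qed

lemma KK_R0_eq:
  assumes D: "D \<ge> 10" and t: "1 \<le> \<theta>" "\<theta> < D-1"
  shows "KK D (R0 D) \<theta> = 3"
proof -
  have "{x\<in>R0 D. x\<le>\<theta>} = {1}" using t D unfolding R0_def by auto
  moreover have "{x\<in>R0 D. x>\<theta>} = {D-1, D+1}" using t D unfolding R0_def by auto
  moreover have "mm D {D-1, D+1} \<le> 2"
    using mm_le3[of D "{D-1, D+1}"] D by (simp add: sqdist_sum_def power2_eq_square algebra_simps)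
  moreover have "mm D {1} \<le> 1"
    using mm_le2[of D "{1}"] D by (simp add: sqdist_sum_def)
  ultimately show ?thesis using KK_R0[OF D, of \<theta>] unfolding KK_def by simp
qed




lemma part3:
  assumes D: "D \<ge> 10" and U: "S0 \<union> S1 \<union> S2 = XX D"
    and d: "S0 \<inter> S1 = {}" "S0 \<inter> S2 = {}" "S1 \<inter> S2 = {}"
  shows "cluster_cost S0 + cluster_cost S1 + cluster_cost S2 \<ge> 6 \<and>
         (cluster_cost S0 + cluster_cost S1 + cluster_cost S2 \<le> 6 \<longrightarrow> (S0,S1,S2) \<in> perm3 D)"
proof -
  have sub: "S0 \<subseteq> XX D" "S1 \<subseteq> XX D" "S2 \<subseteq> XX D" using U by auto
  note nn = cost_nonneg[of S0] cost_nonneg[of S1] cost_nonneg[of S2]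
  show ?thesis
  proof (cases "cluster_cost S0 \<ge> 32 \<or> cluster_cost S1 \<ge> 32 \<or> cluster_cost S2 \<ge> 32")
    case True thus ?thesis using nn by auto
  next
    case False
    hence pp: "S0 \<subseteq> GA D \<or> S0 \<subseteq> GB \<or> S0 \<subseteq> GC D" "S1 \<subseteq> GA D \<or> S1 \<subseteq> GB \<or> S1 \<subseteq> GC D"
       "S2 \<subseteq> GA D \<or> S2 \<subseteq> GB \<or> S2 \<subseteq> GC D"
      using pure_or_big[OF D sub(1)] pure_or_big[OF D sub(2)] pure_or_big[OF D sub(3)] by auto
    have "(S0,S1,S2) \<in> perm3 D" by (rule pure_perm[OF D U d pp])
    hence "cluster_cost S0 + cluster_cost S1 + cluster_cost S2 = 6"
      unfolding perm3_def using cost_GA[of D] cost_GB cost_GC[of D] by auto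
    thus ?thesis using \<open>(S0,S1,S2) \<in> perm3 D\<close> by simp
  qed
qed

lemma lt3: "{..<3::nat} = {0,1,2}" by auto
lemma sum3: "(\<Sum>l<(3::nat). f l) = f 0 + f 1 + (f 2 :: real)"
  by (simp add: lt3)
lemma UN3: "(\<Union>l<(3::nat). C l) = C 0 \<union> C 1 \<union> C (2::nat)"
  by (simp add: lt3 Un_assoc)

lemma kclust3:
  assumes "is_kclustering X 3 C"
  shows "C 0 \<union> C 1 \<union> C 2 = X" "C 0 \<inter> C 1 = {}" "C 0 \<inter> C 2 = {}" "C 1 \<inter> C 2 = {}"
  using assms unfolding is_kclustering_def UN3 by auto

definition C0 :: "real \<Rightarrow> nat \<Rightarrow> real set" where
  "C0 D l = (if l = 0 then GA D else if l = 1 then GB else GC D)"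

lemma C0_clust: assumes D: "D \<ge> 10" shows "is_kclustering (XX D) 3 (C0 D)"
proof -
  have "\<forall>l<3. C0 D l \<noteq> {}" unfolding C0_def GA_def GB_def GC_def by auto
  moreover have "(\<Union>l<3. C0 D l) = XX D" unfolding UN3 C0_def XX_eq by auto
  moreover have "\<forall>l<3. \<forall>l'<3. l \<noteq> l' \<longrightarrow> C0 D l \<inter> C0 D l' = {}"
  proof (intro allI impI)
    fix l l' :: nat assume "l < 3" "l' < 3" "l \<noteq> l'"
    thus "C0 D l \<inter> C0 D l' = {}" using D unfolding C0_def GA_def GB_def GC_def
      by (auto split: if_splits)
  qed
  ultimately show ?thesis unfolding is_kclustering_def by blast
qed

lemma cost_opt_XX: assumes D: "D \<ge> 10" shows "cost_opt (XX D) 3 = 6"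
  unfolding cost_opt_def
proof (rule cInf_eq_minimum)
  have "kmeans_cost 3 (C0 D) = 6" unfolding kmeans_cost_def sum3 C0_def
    using cost_GA[of D] cost_GB cost_GC[of D] by simp
  thus "6 \<in> {kmeans_cost 3 C | C. is_kclustering (XX D) 3 C}" using C0_clust[OF D] by auto
next
  fix x assume "x \<in> {kmeans_cost 3 C | C. is_kclustering (XX D) 3 C}"
  then obtain C where "is_kclustering (XX D) 3 C" "x = kmeans_cost 3 C" by auto
  thus "6 \<le> x" using part3[OF D kclust3[OF \<open>is_kclustering (XX D) 3 C\<close>]]
    unfolding kmeans_cost_def sum3 by simp
qed

lemma opt_exists: assumes D: "D \<ge> 10" shows "optimal_clustering (XX D) 3 (C0 D)"
proof -
  have "kmeans_cost 3 (C0 D) = 6" unfolding kmeans_cost_def sum3 C0_def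
    using cost_GA[of D] cost_GB cost_GC[of D] by simp
  thus ?thesis unfolding optimal_clustering_def cost_opt_XX[OF D] using C0_clust[OF D] by simp
qed

lemma opt_perm:
  assumes D: "D \<ge> 10" and o: "optimal_clustering (XX D) 3 C"
  shows "(C 0, C 1, C 2) \<in> perm3 D" "is_kclustering (XX D) 3 C"
proof -
  show k: "is_kclustering (XX D) 3 C" using o unfolding optimal_clustering_def by simp
  have "kmeans_cost 3 C = 6" using o unfolding optimal_clustering_def cost_opt_XX[OF D] by simp
  thus "(C 0, C 1, C 2) \<in> perm3 D" using part3[OF D kclust3[OF k]]
    unfolding kmeans_cost_def sum3 by simp
qed

lemma mean_pair: "mean {a-1, a+1} = a"
  unfolding mean_def by simp
lemma mean_GA: "mean (GA D) = -D" using mean_pair[of "-D"] unfolding GA_def by (simp add: algebra_simps)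
lemma mean_GB: "mean GB = 0" using mean_pair[of 0] unfolding GB_def by simp
lemma mean_GC: "mean (GC D) = D" using mean_pair[of D] unfolding GC_def by (simp add: algebra_simps)

lemma centers_img:
  assumes "(C 0, C 1, C 2) \<in> perm3 D"
  shows "(\<lambda>l. mean (C l)) ` {..<3::nat} = {-D, 0, D}"
proof -
  have "(\<lambda>l. mean (C l)) ` {..<3::nat} = {mean (C 0), mean (C 1), mean (C 2)}" by (simp add: lt3)
  thus ?thesis using assms unfolding perm3_def using mean_GA[of D] mean_GB mean_GC[of D] by auto
qed

lemma ref_center_eq:
  assumes k: "is_kclustering X k C" and l: "l < k" and x: "x \<in> C l"
  shows "ref_center k C x = mean (C l)"
proof -
  have "(SOME l. l < k \<and> x \<in> C l) = l"
  proof (rule some_equality)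
    show "l < k \<and> x \<in> C l" using l x by simp
  next
    fix l' assume "l' < k \<and> x \<in> C l'"
    thus "l' = l" using k l x unfolding is_kclustering_def by blast
  qed
  thus ?thesis unfolding ref_center_def by simp
qed

lemma ref_centers:
  assumes D: "D \<ge> 10" and o: "optimal_clustering (XX D) 3 C"
  shows "\<And>x. x \<in> GA D \<Longrightarrow> ref_center 3 C x = -D"
    "\<And>x. x \<in> GB \<Longrightarrow> ref_center 3 C x = 0"
    "\<And>x. x \<in> GC D \<Longrightarrow> ref_center 3 C x = D"
proof -
  have p: "(C 0, C 1, C 2) \<in> perm3 D" and k: "is_kclustering (XX D) 3 C" using opt_perm[OF D o] by auto
  have dd: "GA D \<inter> GB = {}" "GA D \<inter> GC D = {}" "GB \<inter> GC D = {}"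
    using D unfolding GA_def GB_def GC_def by auto
  have gen: "ref_center 3 C x = mean G" if "x \<in> G" "G \<in> {GA D, GB, GC D}" for x G
  proof -
    have "x \<in> XX D" using that unfolding XX_eq by auto
    hence "x \<in> C 0 \<union> C 1 \<union> C 2" using kclust3[OF k] by simp
    hence "\<exists>l\<in>{0,1,2::nat}. x \<in> C l" by simp
    then obtain l where l0: "l \<in> {0,1,2::nat}" "x \<in> C l" by blast
    have l: "l < 3" "x \<in> C l" using l0 by auto
    have mem: "C 0 \<in> {GA D, GB, GC D}" "C 1 \<in> {GA D, GB, GC D}" "C 2 \<in> {GA D, GB, GC D}"
      using p unfolding perm3_def by auto
    have "C l \<in> {GA D, GB, GC D}" using mem l0(1) by auto
    hence "C l = G" using that l(2) dd by blast
    thus ?thesis using ref_center_eq[OF k l] by simp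
  qed
  show "\<And>x. x \<in> GA D \<Longrightarrow> ref_center 3 C x = -D" using gen mean_GA by auto
  show "\<And>x. x \<in> GB \<Longrightarrow> ref_center 3 C x = 0" using gen mean_GB by auto
  show "\<And>x. x \<in> GC D \<Longrightarrow> ref_center 3 C x = D" using gen mean_GC by auto
qed




lemma ileaves_count: "length (filter (\<lambda>A. x \<in> A) (ileaves T S)) = (if x \<in> S then 1 else 0)"
  by (induction T arbitrary: S) auto

lemma list3: "length L = 3 \<Longrightarrow> \<exists>a b c. L = [a,b,c]"
  by (auto simp: numeral_3_eq_3 length_Suc_conv)

lemma ileaves3:
  assumes "ileaves T S = [S0,S1,S2]"
  shows "S0 \<union> S1 \<union> S2 = S" "S0 \<inter> S1 = {}" "S0 \<inter> S2 = {}" "S1 \<inter> S2 = {}"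
proof -
  have c: "length (filter (\<lambda>A. x \<in> A) [S0,S1,S2]) = (if x \<in> S then 1 else 0)" for x
    using ileaves_count[of x T S] assms by simp
  show "S0 \<union> S1 \<union> S2 = S"
  proof
    show "S0 \<union> S1 \<union> S2 \<subseteq> S"
    proof
      fix x assume "x \<in> S0 \<union> S1 \<union> S2" thus "x \<in> S" using c[of x] by (auto split: if_splits)
    qed
    show "S \<subseteq> S0 \<union> S1 \<union> S2"
    proof
      fix x assume "x \<in> S" thus "x \<in> S0 \<union> S1 \<union> S2" using c[of x] by (auto split: if_splits)
    qed
  qed
  show "S0 \<inter> S1 = {}" using c by (force split: if_splits)
  show "S0 \<inter> S2 = {}" using c by (force split: if_splits)
  show "S1 \<inter> S2 = {}" using c by (force split: if_splits)
qed

lemma pc3: "partition_cost [a,b,c] = cluster_cost a + cluster_cost b + cluster_cost c"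
  unfolding partition_cost_def by simp

lemma price_expl_XX: assumes D: "D \<ge> 10" shows "price_expl (XX D) 3 = 1"
  unfolding price_expl_def
proof (rule cInf_eq_minimum)
  define T0 where "T0 = INode (-D-1) (-D+1) ILeaf (INode (-1) 1 ILeaf ILeaf)"
  have "ileaves T0 (XX D) = [GA D, GB, GC D]"
    unfolding T0_def using D by (auto simp: XX_def GA_def GB_def GC_def)
  moreover have "interpretable T0" unfolding T0_def by simp
  ultimately have "price_itree T0 (XX D) 3 = 1" "interpretable T0 \<and> length (ileaves T0 (XX D)) = 3"
    unfolding price_itree_def cost_opt_XX[OF D] pc3 using cost_GA[of D] cost_GB cost_GC[of D] by (auto simp: pc3)
  thus "1 \<in> {price_itree T (XX D) 3 | T. interpretable T \<and> length (ileaves T (XX D)) = 3}"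
    by (metis (mono_tags, lifting) mem_Collect_eq)
next
  fix y assume "y \<in> {price_itree T (XX D) 3 | T. interpretable T \<and> length (ileaves T (XX D)) = 3}"
  then obtain T where T: "y = price_itree T (XX D) 3" "length (ileaves T (XX D)) = 3" by auto
  obtain S0 S1 S2 where L: "ileaves T (XX D) = [S0,S1,S2]" using list3[OF T(2)] by blast
  have "cluster_cost S0 + cluster_cost S1 + cluster_cost S2 \<ge> 6"
    using part3[OF D ileaves3[OF L]] by simp
  thus "1 \<le> y" unfolding T(1) price_itree_def L pc3 cost_opt_XX[OF D] by simp
qed




lemma nleaves_repl: "i < nleaves T \<Longrightarrow> nleaves (repl T i \<theta>) = Suc (nleaves T)"
  by (induction T arbitrary: i) auto

lemma step_nleaves: "exkmc_step k cen X T T' \<Longrightarrow> nleaves T' = Suc (nleaves T)"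
  unfolding exkmc_step_def using nleaves_repl by blast

lemma steps_nleaves:
  assumes "(exkmc_step k cen X)\<^sup>*\<^sup>* T T'"
  shows "nleaves T' \<ge> nleaves T \<and> (nleaves T' = nleaves T \<longrightarrow> T' = T)"
  using assms
proof (induction rule: rtranclp_induct)
  case base thus ?case by simp
next
  case (step y z) thus ?case using step_nleaves[OF step(2)] by simp
qed

lemma gainK:
  assumes "cen ` {..<k} = {-D,0,D}"
  shows "exkmc_gain k cen U \<theta> = mm D U - KK D U \<theta>"
  using gain_eq[OF assms] unfolding KK_def by simp

context
  fixes D :: real and cen :: "nat \<Rightarrow> real"
  assumes D: "D \<ge> 10" and P: "cen ` {..<3} = {-D,0,D}"
begin

lemma st1:
  assumes "exkmc_step 3 cen (XX D) TLeaf T1"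
  shows "\<exists>\<theta>. T1 = TNode \<theta> TLeaf TLeaf \<and> -1 \<le> \<theta> \<and> \<theta> < 1"
proof -
  obtain i \<theta> where i: "i < 1" "T1 = repl TLeaf i \<theta>"
    and mx: "\<And>i' \<theta>'. i' < 1 \<Longrightarrow> exkmc_gain 3 cen (tleaves TLeaf (XX D) ! i') \<theta>' \<le> exkmc_gain 3 cen (tleaves TLeaf (XX D) ! i) \<theta>"
    using assms unfolding exkmc_step_def by auto
  have i0: "i = 0" using i by simp
  have "exkmc_gain 3 cen (XX D) 0 \<le> exkmc_gain 3 cen (XX D) \<theta>" using mx[of 0 0] i0 by simp
  hence "KK D (XX D) \<theta> \<le> KK D (XX D) 0" unfolding gainK[OF P] by simp
  hence "KK D (XX D) \<theta> \<le> 2*D^2-4*D+6" using step1_eq[OF D, of 0] by simp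
  hence "-1 \<le> \<theta> \<and> \<theta> < 1" using step1_lb[OF D, of \<theta>] by linarith
  thus ?thesis using i i0 by simp
qed

lemma tl1:
  assumes t: "-1 \<le> \<theta>" "\<theta> < 1"
  shows "tleaves (TNode \<theta> TLeaf TLeaf) (XX D) = [L0 D, R0 D]"
  using t D by (auto simp: XX_def L0_def R0_def)

lemma gL0: "exkmc_gain 3 cen (L0 D) (-2) = D^2 - 2*D"
  unfolding gainK[OF P] mm_L0[OF D] using KK_L0_eq[OF D, of "-2"] D by simp

lemma st2:
  assumes t: "-1 \<le> \<theta>" "\<theta> < 1" and s: "exkmc_step 3 cen (XX D) (TNode \<theta> TLeaf TLeaf) T2"
  shows "\<exists>\<theta>'. (T2 = TNode \<theta> (TNode \<theta>' TLeaf TLeaf) TLeaf \<and> -D+1 \<le> \<theta>' \<and> \<theta>' < -1)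
          \<or> (T2 = TNode \<theta> TLeaf (TNode \<theta>' TLeaf TLeaf) \<and> 1 \<le> \<theta>' \<and> \<theta>' < D-1)"
proof -
  from s[unfolded exkmc_step_def] obtain i \<theta>' where A: "i < nleaves (TNode \<theta> TLeaf TLeaf) \<and> T2 = repl (TNode \<theta> TLeaf TLeaf) i \<theta>' \<and>
        (\<forall>i' \<theta>''. i' < nleaves (TNode \<theta> TLeaf TLeaf) \<longrightarrow> exkmc_gain 3 cen (tleaves (TNode \<theta> TLeaf TLeaf) (XX D) ! i') \<theta>''
         \<le> exkmc_gain 3 cen (tleaves (TNode \<theta> TLeaf TLeaf) (XX D) ! i) \<theta>')" by blast
  hence i0: "i < nleaves (TNode \<theta> TLeaf TLeaf)" "T2 = repl (TNode \<theta> TLeaf TLeaf) i \<theta>'"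
    and mx0: "\<And>i' \<theta>''. i' < nleaves (TNode \<theta> TLeaf TLeaf) \<Longrightarrow> exkmc_gain 3 cen (tleaves (TNode \<theta> TLeaf TLeaf) (XX D) ! i') \<theta>''
         \<le> exkmc_gain 3 cen (tleaves (TNode \<theta> TLeaf TLeaf) (XX D) ! i) \<theta>'" by blast+
  have i: "i < 2" "T2 = repl (TNode \<theta> TLeaf TLeaf) i \<theta>'" using i0 by simp_all
  have mx: "exkmc_gain 3 cen (tleaves (TNode \<theta> TLeaf TLeaf) (XX D) ! i') \<theta>''
         \<le> exkmc_gain 3 cen (tleaves (TNode \<theta> TLeaf TLeaf) (XX D) ! i) \<theta>'" if "i' < 2" for i' \<theta>''
    using mx0[of i' \<theta>''] that by simp
  note tl = tl1[OF t]
  have m0: "D^2 - 2*D \<le> exkmc_gain 3 cen ([L0 D, R0 D] ! i) \<theta>'"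
    using mx[of 0 "-2"] gL0 unfolding tl by simp
  show ?thesis
  proof (cases "i = 0")
    case True
    hence "D^2 - 2*D \<le> mm D (L0 D) - KK D (L0 D) \<theta>'" using m0 unfolding gainK[OF P] by simp
    hence "KK D (L0 D) \<theta>' \<le> 3" unfolding mm_L0[OF D] by simp
    hence "-D+1 \<le> \<theta>' \<and> \<theta>' < -1" using KK_L0[OF D, of \<theta>'] by simp
    moreover have "T2 = TNode \<theta> (TNode \<theta>' TLeaf TLeaf) TLeaf" using i True by simp
    ultimately show ?thesis by blast
  next
    case False
    hence i1: "i = 1" using i by simp
    hence "D^2 - 2*D \<le> mm D (R0 D) - KK D (R0 D) \<theta>'" using m0 unfolding gainK[OF P] by simp
    hence "KK D (R0 D) \<theta>' \<le> 3" unfolding mm_R0[OF D] by simp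
    hence "1 \<le> \<theta>' \<and> \<theta>' < D-1" using KK_R0[OF D, of \<theta>'] by simp
    moreover have "T2 = TNode \<theta> TLeaf (TNode \<theta>' TLeaf TLeaf)" using i i1 by simp
    ultimately show ?thesis by blast
  qed
qed

lemma ex_steps:
  "exkmc_step 3 cen (XX D) TLeaf (TNode 0 TLeaf TLeaf)"
  "exkmc_step 3 cen (XX D) (TNode 0 TLeaf TLeaf) (TNode 0 (TNode (-2) TLeaf TLeaf) TLeaf)"
proof -
  show "exkmc_step 3 cen (XX D) TLeaf (TNode 0 TLeaf TLeaf)"
    unfolding exkmc_step_def
  proof (intro exI conjI allI impI)
    show "(0::nat) < nleaves TLeaf" by simp
    show "TNode 0 TLeaf TLeaf = repl TLeaf 0 0" by simp
    fix i' :: nat and \<theta>' assume "i' < nleaves TLeaf"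
    hence "i' = 0" by simp
    moreover have "KK D (XX D) 0 \<le> KK D (XX D) \<theta>'"
      using step1_eq[OF D, of 0] step1_lb[OF D, of \<theta>'] by simp
    ultimately show "exkmc_gain 3 cen (tleaves TLeaf (XX D) ! i') \<theta>' \<le> exkmc_gain 3 cen (tleaves TLeaf (XX D) ! 0) 0"
      unfolding gainK[OF P] by simp
  qed
  show "exkmc_step 3 cen (XX D) (TNode 0 TLeaf TLeaf) (TNode 0 (TNode (-2) TLeaf TLeaf) TLeaf)"
    unfolding exkmc_step_def
  proof (intro exI conjI allI impI)
    show "(0::nat) < nleaves (TNode 0 TLeaf TLeaf)" by simp
    show "TNode 0 (TNode (-2) TLeaf TLeaf) TLeaf = repl (TNode 0 TLeaf TLeaf) 0 (-2)" by simp
    fix i' :: nat and \<theta>' assume "i' < nleaves (TNode 0 TLeaf TLeaf)"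
    hence c1: "i' = 0 \<or> i' = 1" by (auto simp: less_Suc_eq)
    have c2: "exkmc_gain 3 cen (L0 D) \<theta>' \<le> D^2 - 2*D"
      unfolding gainK[OF P] mm_L0[OF D] using KK_L0[OF D, of \<theta>'] by simp
    have c3: "exkmc_gain 3 cen (R0 D) \<theta>' \<le> D^2 - 2*D"
      unfolding gainK[OF P] mm_R0[OF D] using KK_R0[OF D, of \<theta>'] by simp
    have tl0: "tleaves (TNode 0 TLeaf TLeaf) (XX D) = [L0 D, R0 D]" by (rule tl1) simp_all
    show "exkmc_gain 3 cen (tleaves (TNode 0 TLeaf TLeaf) (XX D) ! i') \<theta>'
        \<le> exkmc_gain 3 cen (tleaves (TNode 0 TLeaf TLeaf) (XX D) ! 0) (-2)"
      unfolding tl0 using c1 c2 c3 gL0 by auto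
  qed
qed

lemma exkmc_shape:
  assumes "(exkmc_step 3 cen (XX D))\<^sup>*\<^sup>* TLeaf T" "nleaves T = 3"
  shows "\<exists>\<theta> \<theta>'. -1 \<le> \<theta> \<and> \<theta> < 1 \<and>
     ((T = TNode \<theta> (TNode \<theta>' TLeaf TLeaf) TLeaf \<and> -D+1 \<le> \<theta>' \<and> \<theta>' < -1)
          \<or> (T = TNode \<theta> TLeaf (TNode \<theta>' TLeaf TLeaf) \<and> 1 \<le> \<theta>' \<and> \<theta>' < D-1))"
  using assms(1)
proof (cases rule: converse_rtranclpE)
  case base thus ?thesis using assms(2) by simp
next
  case (step T1)
  obtain \<theta> where th: "T1 = TNode \<theta> TLeaf TLeaf" "-1 \<le> \<theta>" "\<theta> < 1" using st1[OF step(1)] by blast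
  from step(2) show ?thesis
  proof (cases rule: converse_rtranclpE)
    case base
    have "nleaves T1 = 2" using th by simp
    thus ?thesis using base assms(2) by simp
  next
    case (step T2)
    have "T2 = T" using steps_nleaves[OF step(2)] step_nleaves[OF step(1)] th(1) assms(2) by simp
    obtain \<theta>' where "(T2 = TNode \<theta> (TNode \<theta>' TLeaf TLeaf) TLeaf \<and> -D+1 \<le> \<theta>' \<and> \<theta>' < -1)
          \<or> (T2 = TNode \<theta> TLeaf (TNode \<theta>' TLeaf TLeaf) \<and> 1 \<le> \<theta>' \<and> \<theta>' < D-1)"
      using st2[OF th(2,3)] step(1) th(1) by blast
    thus ?thesis using \<open>T2 = T\<close> th(2,3) by blast
  qed
qed

end




lemma mist0:
  assumes "finite U"
  shows "mistakes c U M \<theta> = 0 \<longleftrightarrow> (\<forall>x\<in>U. c x \<in> M \<longrightarrow> ((x \<le> \<theta>) = (c x \<le> \<theta>)))"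
proof -
  have "finite {x\<in>U. c x \<in> M \<and> ((x \<le> \<theta>) \<noteq> (c x \<le> \<theta>))}" using assms by simp
  thus ?thesis unfolding mistakes_def by auto
qed

lemma imm_leaf_inv: "imm c U M T \<Longrightarrow> card M = 1 \<Longrightarrow> T = TLeaf"
  by (cases rule: imm.cases) auto

lemma imm_node_inv: "imm c U M T \<Longrightarrow> card M \<noteq> 1 \<Longrightarrow>
  \<exists>\<theta> Tl Tr. T = TNode \<theta> Tl Tr \<and> splits_centers M \<theta> \<and>
     (\<forall>\<theta>'. splits_centers M \<theta>' \<longrightarrow> mistakes c U M \<theta> \<le> mistakes c U M \<theta>') \<and>
     imm c {x\<in>U. x \<le> \<theta>} {\<mu>\<in>M. \<mu> \<le> \<theta>} Tl \<and> imm c {x\<in>U. x > \<theta>} {\<mu>\<in>M. \<mu> > \<theta>} Tr"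
  by (cases rule: imm.cases) auto

context
  fixes D :: real and c :: "real \<Rightarrow> real"
  assumes D: "D \<ge> 10"
    and cA: "\<And>x. x \<in> GA D \<Longrightarrow> c x = -D"
    and cB: "\<And>x. x \<in> GB \<Longrightarrow> c x = 0"
    and cC: "\<And>x. x \<in> GC D \<Longrightarrow> c x = D"
begin

lemma cv: "c (-D-1) = -D" "c (-D+1) = -D" "c (1-D) = -D" "c (-1) = 0" "c 1 = 0" "c (D-1) = D" "c (D+1) = D"
  using cA cB cC unfolding GA_def GB_def GC_def by auto

definition U1 where "U1 = {-1, 1, D-1, D+1}"
definition U2 where "U2 = {-D-1, -D+1, -1, 1}"

lemma fin: "finite U1" "finite U2" "finite (XX D)" unfolding U1_def U2_def XX_def by auto

lemma imm_U1:
  assumes "imm c U1 {0, D} T"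
  shows "\<exists>\<theta>. T = TNode \<theta> TLeaf TLeaf \<and> {x\<in>U1. x \<le> \<theta>} = GB \<and> {x\<in>U1. x > \<theta>} = GC D"
proof -
  have "card {0, D} \<noteq> 1" using D by simp
  then obtain \<theta> Tl Tr where T: "T = TNode \<theta> Tl Tr" and sp: "splits_centers {0,D} \<theta>"
    and mn: "\<forall>\<theta>'. splits_centers {0,D} \<theta>' \<longrightarrow> mistakes c U1 {0,D} \<theta> \<le> mistakes c U1 {0,D} \<theta>'"
    and l: "imm c {x\<in>U1. x \<le> \<theta>} {\<mu>\<in>{0,D}. \<mu> \<le> \<theta>} Tl" and r: "imm c {x\<in>U1. x > \<theta>} {\<mu>\<in>{0,D}. \<mu> > \<theta>} Tr"
    using imm_node_inv[OF assms] by blast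
  have sp2: "splits_centers {0,D} 2" using D unfolding splits_centers_def by auto
  have z2: "mistakes c U1 {0,D} 2 = 0" unfolding mist0[OF fin(1)] unfolding U1_def using D by (simp add: cv)
  have "mistakes c U1 {0,D} \<theta> = 0" using mn sp2 z2 by fastforce
  hence z: "\<forall>x\<in>U1. c x \<in> {0,D} \<longrightarrow> ((x \<le> \<theta>) = (c x \<le> \<theta>))" unfolding mist0[OF fin(1)] .
  have r1: "0 \<le> \<theta>" "\<theta> < D" using sp D unfolding splits_centers_def by auto
  have "(1 \<le> \<theta>) = (0 \<le> \<theta>)" using z[rule_format, of "1"] D unfolding U1_def by (simp add: cv)
  hence t1: "1 \<le> \<theta>" using r1 by simp
  have "(D-1 \<le> \<theta>) = (D \<le> \<theta>)" using z[rule_format, of "D-1"] D unfolding U1_def by (simp add: cv)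
  hence t2: "\<theta> < D-1" using r1 by linarith
  have m1: "{\<mu>\<in>{0,D}. \<mu> \<le> \<theta>} = {0}" using t1 t2 D by auto
  have m2: "{\<mu>\<in>{0,D}. \<mu> > \<theta>} = {D}" using t1 t2 D by auto
  have "Tl = TLeaf" using imm_leaf_inv[OF l] m1 by simp
  moreover have "Tr = TLeaf" using imm_leaf_inv[OF r] m2 by simp
  moreover have "{x\<in>U1. x \<le> \<theta>} = GB" "{x\<in>U1. x > \<theta>} = GC D"
    using t1 t2 D unfolding U1_def GB_def GC_def by auto
  ultimately show ?thesis using T by blast
qed

lemma imm_U2:
  assumes "imm c U2 {-D, 0} T"
  shows "\<exists>\<theta>. T = TNode \<theta> TLeaf TLeaf \<and> {x\<in>U2. x \<le> \<theta>} = GA D \<and> {x\<in>U2. x > \<theta>} = GB"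
proof -
  have "card {-D, 0} \<noteq> 1" using D by simp
  then obtain \<theta> Tl Tr where T: "T = TNode \<theta> Tl Tr" and sp: "splits_centers {-D,0} \<theta>"
    and mn: "\<forall>\<theta>'. splits_centers {-D,0} \<theta>' \<longrightarrow> mistakes c U2 {-D,0} \<theta> \<le> mistakes c U2 {-D,0} \<theta>'"
    and l: "imm c {x\<in>U2. x \<le> \<theta>} {\<mu>\<in>{-D,0}. \<mu> \<le> \<theta>} Tl" and r: "imm c {x\<in>U2. x > \<theta>} {\<mu>\<in>{-D,0}. \<mu> > \<theta>} Tr"
    using imm_node_inv[OF assms] by blast
  have sp2: "splits_centers {-D,0} (-2)" using D unfolding splits_centers_def by auto
  have z2: "mistakes c U2 {-D,0} (-2) = 0" unfolding mist0[OF fin(2)] unfolding U2_def using D by (simp add: cv)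
  have "mistakes c U2 {-D,0} \<theta> = 0" using mn sp2 z2 by fastforce
  hence z: "\<forall>x\<in>U2. c x \<in> {-D,0} \<longrightarrow> ((x \<le> \<theta>) = (c x \<le> \<theta>))" unfolding mist0[OF fin(2)] .
  have r1: "-D \<le> \<theta>" "\<theta> < 0" using sp D unfolding splits_centers_def by auto
  have "(-1 \<le> \<theta>) = (0 \<le> \<theta>)" using z[rule_format, of "-1"] D unfolding U2_def by (simp add: cv)
  hence t1: "\<theta> < -1" using r1 by linarith
  have "(-D+1 \<le> \<theta>) = (-D \<le> \<theta>)" using z[rule_format, of "-D+1"] D unfolding U2_def by (simp add: cv)
  hence t2: "-D+1 \<le> \<theta>" using r1 by linarith
  have m1: "{\<mu>\<in>{-D,0}. \<mu> \<le> \<theta>} = {-D}" using t1 t2 D by auto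
  have m2: "{\<mu>\<in>{-D,0}. \<mu> > \<theta>} = {0}" using t1 t2 D by auto
  have "Tl = TLeaf" using imm_leaf_inv[OF l] m1 by simp
  moreover have "Tr = TLeaf" using imm_leaf_inv[OF r] m2 by simp
  moreover have "{x\<in>U2. x \<le> \<theta>} = GA D" "{x\<in>U2. x > \<theta>} = GB"
    using t1 t2 D unfolding U2_def GA_def GB_def by auto
  ultimately show ?thesis using T by blast
qed

lemma imm_root:
  assumes "imm c (XX D) {-D, 0, D} T"
  shows "tleaves T (XX D) = [GA D, GB, GC D]"
proof -
  have "card {-D, 0, D} \<noteq> 1" using D by simp
  then obtain \<theta> Tl Tr where T: "T = TNode \<theta> Tl Tr" and sp: "splits_centers {-D,0,D} \<theta>"
    and mn: "\<forall>\<theta>'. splits_centers {-D,0,D} \<theta>' \<longrightarrow> mistakes c (XX D) {-D,0,D} \<theta> \<le> mistakes c (XX D) {-D,0,D} \<theta>'"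
    and l: "imm c {x\<in>XX D. x \<le> \<theta>} {\<mu>\<in>{-D,0,D}. \<mu> \<le> \<theta>} Tl" and r: "imm c {x\<in>XX D. x > \<theta>} {\<mu>\<in>{-D,0,D}. \<mu> > \<theta>} Tr"
    using imm_node_inv[OF assms] by blast
  have sp2: "splits_centers {-D,0,D} (-2)" using D unfolding splits_centers_def by auto
  have z2: "mistakes c (XX D) {-D,0,D} (-2) = 0" unfolding mist0[OF fin(3)] unfolding XX_def using D by (simp add: cv)
  have "mistakes c (XX D) {-D,0,D} \<theta> = 0" using mn sp2 z2 by fastforce
  hence z: "\<forall>x\<in>XX D. c x \<in> {-D,0,D} \<longrightarrow> ((x \<le> \<theta>) = (c x \<le> \<theta>))" unfolding mist0[OF fin(3)] .
  have r1: "-D \<le> \<theta>" "\<theta> < D" using sp D unfolding splits_centers_def by auto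
  have e1: "(-D+1 \<le> \<theta>) = (-D \<le> \<theta>)" using z[rule_format, of "-D+1"] D unfolding XX_def by (simp add: cv)
  have e2: "(-1 \<le> \<theta>) = (0 \<le> \<theta>)" using z[rule_format, of "-1"] D unfolding XX_def by (simp add: cv)
  have e3: "(1 \<le> \<theta>) = (0 \<le> \<theta>)" using z[rule_format, of "1"] D unfolding XX_def by (simp add: cv)
  have e4: "(D-1 \<le> \<theta>) = (D \<le> \<theta>)" using z[rule_format, of "D-1"] D unfolding XX_def by (simp add: cv)
  have t: "-D+1 \<le> \<theta>" "\<theta> < D-1" "\<theta> < -1 \<or> 1 \<le> \<theta>" using e1 e2 e3 e4 r1 by linarith+
  show ?thesis
  proof (cases "\<theta> < -1")
    case True
    have m1: "{\<mu>\<in>{-D,0,D}. \<mu> \<le> \<theta>} = {-D}" using t True D by auto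
    have m2: "{\<mu>\<in>{-D,0,D}. \<mu> > \<theta>} = {0, D}" using t True D by auto
    have s1: "{x\<in>XX D. x \<le> \<theta>} = GA D" using t True D unfolding XX_def GA_def by auto
    have s2: "{x\<in>XX D. x > \<theta>} = U1" using t True D unfolding XX_def U1_def by auto
    have "Tl = TLeaf" using imm_leaf_inv[OF l] m1 by simp
    moreover obtain \<theta>2 where "Tr = TNode \<theta>2 TLeaf TLeaf" "{x\<in>U1. x \<le> \<theta>2} = GB" "{x\<in>U1. x > \<theta>2} = GC D"
      using imm_U1[of Tr] r unfolding m2 s2 by blast
    ultimately show ?thesis unfolding T using s1 s2 by simp
  next
    case False
    hence F: "1 \<le> \<theta>" using t by simp
    have m1: "{\<mu>\<in>{-D,0,D}. \<mu> \<le> \<theta>} = {-D, 0}" using t F D by auto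
    have m2: "{\<mu>\<in>{-D,0,D}. \<mu> > \<theta>} = {D}" using t F D by auto
    have s1: "{x\<in>XX D. x \<le> \<theta>} = U2" using t F D unfolding XX_def U2_def by auto
    have s2: "{x\<in>XX D. x > \<theta>} = GC D" using t F D unfolding XX_def GC_def by auto
    have "Tr = TLeaf" using imm_leaf_inv[OF r] m2 by simp
    moreover obtain \<theta>2 where "Tl = TNode \<theta>2 TLeaf TLeaf" "{x\<in>U2. x \<le> \<theta>2} = GA D" "{x\<in>U2. x > \<theta>2} = GB"
      using imm_U2[of Tl] l unfolding m1 s1 by blast
    ultimately show ?thesis unfolding T using s1 s2 by simp
  qed
qed

lemma imm_exists: "imm c (XX D) {-D, 0, D} (TNode (-2) TLeaf (TNode 2 TLeaf TLeaf))"
proof -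
  have sp2: "splits_centers {-D,0,D} (-2)" using D unfolding splits_centers_def by auto
  have z2: "mistakes c (XX D) {-D,0,D} (-2) = 0" unfolding mist0[OF fin(3)] unfolding XX_def using D by (simp add: cv)
  have c3: "card {-D, 0, D} \<noteq> 1" using D by simp
  have m1: "{\<mu>\<in>{-D,0,D}. \<mu> \<le> -2} = {-D}" using D by auto
  have m2: "{\<mu>\<in>{-D,0,D}. \<mu> > -2} = {0, D}" using D by auto
  have s2: "{x\<in>XX D. x > -2} = U1" using D unfolding XX_def U1_def by auto
  have L: "imm c {x\<in>XX D. x \<le> -2} {\<mu>\<in>{-D,0,D}. \<mu> \<le> -2} TLeaf"
    unfolding m1 by (rule imm.imm_leaf) simp
  have R: "imm c U1 {0, D} (TNode 2 TLeaf TLeaf)"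
  proof -
    have sp: "splits_centers {0,D} 2" using D unfolding splits_centers_def by auto
    have z: "mistakes c U1 {0,D} 2 = 0" unfolding mist0[OF fin(1)] unfolding U1_def using D by (simp add: cv)
    have c2: "card {0, D} \<noteq> 1" using D by simp
    have a1: "{\<mu>\<in>{0,D}. \<mu> \<le> 2} = {0}" using D by auto
    have a2: "{\<mu>\<in>{0,D}. \<mu> > 2} = {D}" using D by auto
    have "imm c {x\<in>U1. x \<le> 2} {\<mu>\<in>{0,D}. \<mu> \<le> 2} TLeaf" unfolding a1 by (rule imm.imm_leaf) simp
    moreover have "imm c {x\<in>U1. x > 2} {\<mu>\<in>{0,D}. \<mu> > 2} TLeaf" unfolding a2 by (rule imm.imm_leaf) simp
    ultimately show ?thesis using imm.imm_node[OF c2 sp] z by simp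
  qed
  show ?thesis
    using imm.imm_node[OF c3 sp2, of c "XX D" TLeaf "TNode 2 TLeaf TLeaf"] z2 L R unfolding m2 s2 by simp
qed

end




lemma bad_cost:
  assumes D: "D \<ge> 10" and t: "-1 \<le> \<theta>" "\<theta> < 1"
    and T: "T = TNode \<theta> (TNode \<theta>' TLeaf TLeaf) TLeaf \<or> T = TNode \<theta> TLeaf (TNode \<theta>' TLeaf TLeaf)"
  shows "partition_cost (tleaves T (XX D)) \<ge> (D-2)^2/2"
proof -
  have finX: "finite (XX D)" unfolding XX_def by simp
  have sq: "(D-2)^2 = (1 - (D-1))^2" "(D-2)^2 = (-D+1 - (-1))^2" by (simp_all add: power2_eq_square algebra_simps)
  from T show ?thesis
  proof
    assume T1: "T = TNode \<theta> (TNode \<theta>' TLeaf TLeaf) TLeaf"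
    define A3 where "A3 = {x\<in>XX D. x > \<theta>}"
    have "1 \<in> A3" "D-1 \<in> A3" unfolding A3_def XX_def using t D by auto
    moreover have "finite A3" unfolding A3_def using finX by simp
    ultimately have c3: "cluster_cost A3 \<ge> (D-2)^2/2" using pair_lb[of A3 1 "D-1"] sq by simp
    have "tleaves T (XX D) = [{x\<in>{x\<in>XX D. x \<le> \<theta>}. x \<le> \<theta>'}, {x\<in>{x\<in>XX D. x \<le> \<theta>}. x > \<theta>'}, A3]"
      unfolding T1 A3_def by simp
    hence "partition_cost (tleaves T (XX D)) = cluster_cost {x\<in>{x\<in>XX D. x \<le> \<theta>}. x \<le> \<theta>'} + cluster_cost {x\<in>{x\<in>XX D. x \<le> \<theta>}. x > \<theta>'} + cluster_cost A3"
      by (simp add: pc3)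
    thus ?thesis using c3 cost_nonneg[of "{x\<in>{x\<in>XX D. x \<le> \<theta>}. x \<le> \<theta>'}"] cost_nonneg[of "{x\<in>{x\<in>XX D. x \<le> \<theta>}. x > \<theta>'}"] by linarith
  next
    assume T2: "T = TNode \<theta> TLeaf (TNode \<theta>' TLeaf TLeaf)"
    define A1 where "A1 = {x\<in>XX D. x \<le> \<theta>}"
    have "-D+1 \<in> A1" "-1 \<in> A1" unfolding A1_def XX_def using t D by auto
    moreover have "finite A1" unfolding A1_def using finX by simp
    ultimately have c1: "cluster_cost A1 \<ge> (D-2)^2/2" using pair_lb[of A1 "-D+1" "-1"] sq by simp
    have "tleaves T (XX D) = [A1, {x\<in>{x\<in>XX D. x > \<theta>}. x \<le> \<theta>'}, {x\<in>{x\<in>XX D. x > \<theta>}. x > \<theta>'}]"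
      unfolding T2 A1_def by simp
    hence "partition_cost (tleaves T (XX D)) = cluster_cost A1 + cluster_cost {x\<in>{x\<in>XX D. x > \<theta>}. x \<le> \<theta>'} + cluster_cost {x\<in>{x\<in>XX D. x > \<theta>}. x > \<theta>'}"
      by (simp add: pc3)
    thus ?thesis using c1 cost_nonneg[of "{x\<in>{x\<in>XX D. x > \<theta>}. x \<le> \<theta>'}"] cost_nonneg[of "{x\<in>{x\<in>XX D. x > \<theta>}. x > \<theta>'}"] by linarith
  qed
qed

theorem theorem6:
  fixes m :: nat
  shows "\<exists>(k::nat) (X::real set). finite X \<and>
           price_expl X k = 1 \<and>
           (\<exists>C. optimal_clustering X k C) \<and>
           (\<forall>C. optimal_clustering X k C \<longrightarrow>
              (\<exists>T. imm_tree X k C T) \<and>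
              (\<forall>T. imm_tree X k C T \<longrightarrow> price_ttree T X k = 1) \<and>
              (\<exists>T. exkmc_tree X k C T) \<and>
              (\<forall>T. exkmc_tree X k C T \<longrightarrow> price_ttree T X k \<ge> real m))"
proof -
  define D where "D = real m + 10"
  have D: "D \<ge> 10" unfolding D_def by simp
  show ?thesis
  proof (intro exI[of _ 3] exI[of _ "XX D"] conjI allI impI)
  show "finite (XX D)" unfolding XX_def by simp
  show "price_expl (XX D) 3 = 1" by (rule price_expl_XX[OF D])
  show "\<exists>C. optimal_clustering (XX D) 3 C" using opt_exists[OF D] by blast
  fix C assume o: "optimal_clustering (XX D) 3 C"
  have P: "(\<lambda>l. mean (C l)) ` {..<3} = {-D, 0, D}" using centers_img opt_perm[OF D o] by blast
  note rc = ref_centers[OF D o]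
  have imm_iff: "imm_tree (XX D) 3 C T \<longleftrightarrow> imm (ref_center 3 C) (XX D) {-D, 0, D} T" for T
    unfolding imm_tree_def P ..
  show "\<exists>T. imm_tree (XX D) 3 C T" unfolding imm_iff using imm_exists[of D "ref_center 3 C", OF D rc] by blast
  show "price_ttree T (XX D) 3 = 1" if "imm_tree (XX D) 3 C T" for T
  proof -
    have "tleaves T (XX D) = [GA D, GB, GC D]" using imm_root[of D "ref_center 3 C", OF D rc] that unfolding imm_iff by blast
    thus ?thesis unfolding price_ttree_def cost_opt_XX[OF D] pc3
      using cost_GA[of D] cost_GB cost_GC[of D] by (simp add: pc3)
  qed
  show "\<exists>T. exkmc_tree (XX D) 3 C T"
  proof -
    let ?st = "exkmc_step 3 (\<lambda>l. mean (C l)) (XX D)"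
    have "?st\<^sup>*\<^sup>* TLeaf (TNode 0 (TNode (-2) TLeaf TLeaf) TLeaf)"
      using ex_steps[OF D P] by (meson converse_rtranclp_into_rtranclp rtranclp.rtrancl_refl)
    thus ?thesis unfolding exkmc_tree_def by force
  qed
  show "price_ttree T (XX D) 3 \<ge> real m" if e: "exkmc_tree (XX D) 3 C T" for T
  proof -
    obtain \<theta> \<theta>' where t: "-1 \<le> \<theta>" "\<theta> < 1" and
      T: "T = TNode \<theta> (TNode \<theta>' TLeaf TLeaf) TLeaf \<or> T = TNode \<theta> TLeaf (TNode \<theta>' TLeaf TLeaf)"
    proof -
      have "(exkmc_step 3 (\<lambda>l. mean (C l)) (XX D))\<^sup>*\<^sup>* TLeaf T" "nleaves T = 3" using e unfolding exkmc_tree_def by auto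
      from exkmc_shape[OF D P this] show ?thesis using that by blast
    qed
    have pc: "partition_cost (tleaves T (XX D)) \<ge> (D-2)^2/2" by (rule bad_cost[OF D t T])
    have "(D-2)^2/2/6 \<ge> real m"
    proof -
      have "(D-2)^2 = (real m)^2 + 16 * real m + 64" unfolding D_def by (simp add: power2_eq_square algebra_simps)
      moreover have "(real m)^2 \<ge> 0" by simp
      ultimately show ?thesis by simp
    qed
    thus ?thesis unfolding price_ttree_def cost_opt_XX[OF D] using pc by (simp add: divide_right_mono)
  qed
  qed
qed



end
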